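(* Let $G\curvearrowright X$ and $H\curvearrowright Y$ be group actions with $\mathrm{Con}(G\curvearrowright X)=\mathrm{Con}(H\curvearrowright Y)$. Then: (1) $X$ is finite (resp. infinite) if and only if $Y$ is finite (resp. infinite); (2) for every $n$, $|X|=n$ if and only if $|Y|=n$; (3) for every $n$, $|X|\ge n$ if and only if $|Y|\ge n$.
   Context: For an action $G\curvearrowright X$, an ordered tuple $\mathfrak{g}=(g_1,\dots,g_n)$ of elements of $G$ and a finite partition $\mathcal{E}=\{E_1,\dots,E_m\}$ of $X$ (a configuration pair), a configuration is a tuple $C=(C_0,\dots,C_n)\in\{1,\dots,m\}^{n+1}$ such that some $x\in E_{C_0}$ satisfies $g_i\cdot x\in E_{C_i}$ for $i=1,\dots,n$; the set of these is $\mathrm{Con}(\mathfrak{g},\mathcal{E};X)$. Then $\mathrm{Con}(G\curvearrowright X)=\{\mathrm{Con}(\mathfrak{g},\mathcal{E};X): (\mathfrak{g},\mathcal{E})\text{ a configuration pair}\}$. *)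

theory Defs
  imports "HOL-Algebra.Group_Action"
begin

text \<open>A finite partition of X, as an ordered list of blocks E_1,...,E_m
  (block E_i is Es ! (i - 1)): blocks are nonempty, pairwise disjoint and cover X.\<close>
definition is_partition :: "'x set \<Rightarrow> 'x set list \<Rightarrow> bool" where
  "is_partition X Es \<longleftrightarrow>
     (\<forall>i < length Es. Es ! i \<noteq> {}) \<and>
     (\<forall>i < length Es. \<forall>j < length Es. i \<noteq> j \<longrightarrow> Es ! i \<inter> Es ! j = {}) \<and>
     \<Union> (set Es) = X"

definition config_pair :: "('g, 'm) monoid_scheme \<Rightarrow> 'x set \<Rightarrow> 'g list \<Rightarrow> 'x set list \<Rightarrow> bool" where
  "config_pair G X gs Es \<longleftrightarrow> gs \<noteq> [] \<and> set gs \<subseteq> carrier G \<and> is_partition X Es"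

definition Con_pair :: "('g \<Rightarrow> 'x \<Rightarrow> 'x) \<Rightarrow> 'g list \<Rightarrow> 'x set list \<Rightarrow> nat list set" where
  "Con_pair \<phi> gs Es =
     {C. length C = length gs + 1 \<and> (\<forall>k < length C. 1 \<le> C ! k \<and> C ! k \<le> length Es) \<and>
         (\<exists>x \<in> Es ! (C ! 0 - 1).
            \<forall>i \<in> {1..length gs}. \<phi> (gs ! (i - 1)) x \<in> Es ! (C ! i - 1))}"

definition Con_action :: "('g, 'm) monoid_scheme \<Rightarrow> 'x set \<Rightarrow> ('g \<Rightarrow> 'x \<Rightarrow> 'x) \<Rightarrow> nat list set set" where
  "Con_action G X \<phi> = {Con_pair \<phi> gs Es | gs Es. config_pair G X gs Es}"

end

theory Submission
  imports Defs
begin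

lemma con_fst:
  assumes ga: "group_action G X \<phi>" and cp: "config_pair G X gs Es"
  shows "(\<lambda>C. C!0) ` Con_pair \<phi> gs Es = {1..length Es}"
proof
  show "(\<lambda>C. C!0) ` Con_pair \<phi> gs Es \<subseteq> {1..length Es}"
  proof
    fix c assume "c \<in> (\<lambda>C. C!0) ` Con_pair \<phi> gs Es"
    then obtain C where C: "C \<in> Con_pair \<phi> gs Es" "c = C ! 0" by blast
    then have "length C = length gs + 1" "\<forall>k<length C. 1 \<le> C ! k \<and> C ! k \<le> length Es"
      unfolding Con_pair_def by simp_all
    then have "1 \<le> C ! 0 \<and> C ! 0 \<le> length Es" by simp
    then show "c \<in> {1..length Es}" using C by simp
  qed
next
  show "{1..length Es} \<subseteq> (\<lambda>C. C!0) ` Con_pair \<phi> gs Es"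
  proof
    fix j assume j: "j \<in> {1..length Es}"
    have P: "is_partition X Es" and gsG: "set gs \<subseteq> carrier G" using cp unfolding config_pair_def by auto
    have jl: "j - 1 < length Es" using j by auto
    have ne: "Es ! (j-1) \<noteq> {}" using P jl unfolding is_partition_def by blast
    then obtain x where x: "x \<in> Es ! (j-1)" by blast
    have "Es ! (j-1) \<in> set Es" using jl by (rule nth_mem)
    then have xX: "x \<in> X" using P x unfolding is_partition_def by blast
    define blk where "blk = (\<lambda>y. SOME k. k < length Es \<and> y \<in> Es ! k)"
    have blk: "blk y < length Es \<and> y \<in> Es ! blk y" if "y \<in> X" for y
    proof -
      have "\<exists>k. k < length Es \<and> y \<in> Es ! k" using P that unfolding is_partition_def
        by (metis UnionE in_set_conv_nth)
      then show ?thesis unfolding blk_def by (rule someI_ex)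
    qed
    have img: "\<phi> g x \<in> X" if "g \<in> set gs" for g
      using group_action.element_image[OF ga] gsG that xX by blast
    define C where "C = j # map (\<lambda>g. Suc (blk (\<phi> g x))) gs"
    have "C \<in> Con_pair \<phi> gs Es"
      unfolding Con_pair_def
    proof (intro CollectI conjI)
      show "length C = length gs + 1" unfolding C_def by simp
      show "\<forall>k<length C. 1 \<le> C ! k \<and> C ! k \<le> length Es"
      proof (intro allI impI)
        fix k assume k: "k < length C"
        show "1 \<le> C ! k \<and> C ! k \<le> length Es"
        proof (cases k)
          case 0 then show ?thesis using j C_def by simp
        next
          case (Suc k')
          then have kl: "k' < length gs" using k C_def by simp
          have "C ! k = Suc (blk (\<phi> (gs ! k') x))" using Suc kl C_def by simp
          then show ?thesis using blk[OF img[OF nth_mem[OF kl]]] by simp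
        qed
      qed
      show "\<exists>x\<in>Es ! (C ! 0 - 1). \<forall>i\<in>{1..length gs}. \<phi> (gs ! (i - 1)) x \<in> Es ! (C ! i - 1)"
      proof (rule bexI[of _ x])
        show "x \<in> Es ! (C ! 0 - 1)" using x C_def by simp
        show "\<forall>i\<in>{1..length gs}. \<phi> (gs ! (i - 1)) x \<in> Es ! (C ! i - 1)"
        proof
          fix i assume i: "i \<in> {1..length gs}"
          define i' where "i' = i - 1"
          have i': "i = Suc i'" "i' < length gs" using i unfolding i'_def by auto
          then show "\<phi> (gs ! (i - 1)) x \<in> Es ! (C ! i - 1)"
            using C_def blk[OF img[OF nth_mem[OF i'(2)]]] i'(1) by simp
        qed
      qed
    qed
    moreover have "C ! 0 = j" using C_def by simp
    ultimately show "j \<in> (\<lambda>C. C!0) ` Con_pair \<phi> gs Es" by (metis image_eqI)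
  qed
qed

lemma part_iff:
  assumes ga: "group_action G X \<phi>"
  shows "(\<exists>S\<in>Con_action G X \<phi>. (\<lambda>C. C!0) ` S = {1..m}) \<longleftrightarrow> (\<exists>Es. is_partition X Es \<and> length Es = m)"
proof
  assume "\<exists>S\<in>Con_action G X \<phi>. (\<lambda>C. C!0) ` S = {1..m}"
  then obtain gs Es where cp: "config_pair G X gs Es" and e: "(\<lambda>C. C!0) ` Con_pair \<phi> gs Es = {1..m}"
    unfolding Con_action_def by blast
  then have "{1..length Es} = {1..m}" using con_fst[OF ga cp] by simp
  then have "length Es = m"
    by (simp add: Icc_eq_Icc) linarith
  moreover have "is_partition X Es" using cp unfolding config_pair_def by simp
  ultimately show "\<exists>Es. is_partition X Es \<and> length Es = m" by blast
next
  assume "\<exists>Es. is_partition X Es \<and> length Es = m"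
  then obtain Es where P: "is_partition X Es" "length Es = m" by blast
  have "group G" using ga unfolding group_action_def group_hom_def by simp
  then have "\<one>\<^bsub>G\<^esub> \<in> carrier G" by (rule monoid.one_closed[OF group.is_monoid])
  then have cp: "config_pair G X [\<one>\<^bsub>G\<^esub>] Es" using P unfolding config_pair_def by simp
  show "\<exists>S\<in>Con_action G X \<phi>. (\<lambda>C. C!0) ` S = {1..m}"
  proof (rule bexI)
    show "Con_pair \<phi> [\<one>\<^bsub>G\<^esub>] Es \<in> Con_action G X \<phi>" unfolding Con_action_def using cp by blast
    show "(\<lambda>C. C!0) ` Con_pair \<phi> [\<one>\<^bsub>G\<^esub>] Es = {1..m}" using con_fst[OF ga cp] P by simp
  qed
qed

lemma part_card:
  assumes m: "m \<ge> 1"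
  shows "(\<exists>Es. is_partition X Es \<and> length Es = m) \<longleftrightarrow> (infinite X \<or> m \<le> card X)"
proof
  assume "\<exists>Es. is_partition X Es \<and> length Es = m"
  then obtain Es where P: "is_partition X Es" "length Es = m" by blast
  define f where "f = (\<lambda>i. SOME x. x \<in> Es ! i)"
  have f: "f i \<in> Es ! i" if "i < m" for i
    unfolding f_def using P that unfolding is_partition_def by (simp add: some_in_eq)
  have fX: "f ` {..<m} \<subseteq> X" using f P unfolding is_partition_def
    by (metis (no_types, lifting) UnionI image_subset_iff lessThan_iff nth_mem)
  have "inj_on f {..<m}"
  proof (rule inj_onI)
    fix i j assume "i \<in> {..<m}" "j \<in> {..<m}" "f i = f j"
    then show "i = j" using f P unfolding is_partition_def by (metis disjoint_iff lessThan_iff)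
  qed
  then have "card (f ` {..<m}) = m" by (simp add: card_image)
  note cm = this
  have "m \<le> card X" if fin: "finite X"
    using card_mono[OF fin fX] cm by simp
  then show "infinite X \<or> m \<le> card X" by blast
next
  assume A: "infinite X \<or> m \<le> card X"
  obtain xs where xs: "distinct xs" "set xs \<subseteq> X" "length xs = m"
  proof -
    obtain F where F: "F \<subseteq> X" "finite F" "card F = m"
      using A by (meson infinite_arbitrarily_large obtain_subset_with_card_n)
    obtain ys where ys: "set ys = F" "distinct ys" using finite_distinct_list[OF F(2)] by blast
    show ?thesis using that[of ys] ys F distinct_card[OF ys(2)] by simp
  qed
  have xsX: "xs ! i \<in> X" if "i < m" for i using xs that by (metis nth_mem subsetD)
  have xinj: "xs ! i = xs ! j \<longleftrightarrow> i = j" if "i < m" "j < m" for i j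
    using xs that by (simp add: nth_eq_iff_index_eq)
  define T where "T = (\<lambda>i. xs ! i) ` {1..<m}"
  define Es where "Es = map (\<lambda>i. if i = 0 then X - T else {xs!i}) [0..<m]"
  have len: "length Es = m" unfolding Es_def by simp
  have E0: "Es ! 0 = X - T" using m unfolding Es_def by simp
  have Ei: "Es ! i = {xs ! i}" if "0 < i" "i < m" for i using that unfolding Es_def by simp
  have x0T: "xs ! 0 \<notin> T" unfolding T_def using xinj m by auto
  have x0: "xs ! 0 \<in> X" using xsX m by simp
  have "is_partition X Es"
    unfolding is_partition_def
  proof (intro conjI allI impI)
    fix i assume i: "i < length Es"
    show "Es ! i \<noteq> {}"
    proof (cases "i = 0")
      case True then show ?thesis using E0 x0 x0T by blast
    next
      case False then show ?thesis using Ei i len by simp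
    qed
  next
    fix i j assume ij: "i < length Es" "j < length Es" "i \<noteq> j"
    show "Es ! i \<inter> Es ! j = {}"
    proof (cases "i = 0")
      case True
      then have "xs ! j \<in> T" using ij len unfolding T_def by auto
      then show ?thesis using True E0 Ei ij len by simp
    next
      case False
      show ?thesis
      proof (cases "j = 0")
        case True
        then have "xs ! i \<in> T" using ij len False unfolding T_def by auto
        then show ?thesis using True E0 Ei ij len by simp
      next
        case False2: False
        then show ?thesis using False Ei ij len xinj by simp
      qed
    qed
  next
    show "\<Union> (set Es) = X"
    proof
      show "\<Union> (set Es) \<subseteq> X"
      proof
        fix y assume "y \<in> \<Union> (set Es)"
        then obtain i where i: "i < m" "y \<in> Es ! i" using len by (metis UnionE in_set_conv_nth)
        show "y \<in> X"
        proof (cases "i = 0")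
          case True then show ?thesis using i E0 by simp
        next
          case False then show ?thesis using i Ei xsX by simp
        qed
      qed
      show "X \<subseteq> \<Union> (set Es)"
      proof
        fix y assume y: "y \<in> X"
        show "y \<in> \<Union> (set Es)"
        proof (cases "y \<in> T")
          case True
          then obtain i where i: "0 < i" "i < m" "y = xs ! i" unfolding T_def by (auto simp: Suc_le_eq)
          then have "Es ! i = {y}" using Ei by simp
          then show ?thesis using i len by (metis UnionI insertI1 nth_mem)
        next
          case False
          then have "y \<in> Es ! 0" using y E0 by simp
          then show ?thesis using len m by (metis UnionI less_le_trans nth_mem zero_less_one)
        qed
      qed
    qed
  qed
  then show "\<exists>Es. is_partition X Es \<and> length Es = m" using len by blast
qed


lemma A_iff:
  assumes ga: "group_action G X \<phi>" and gb: "group_action H Y \<psi>"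
    and eq: "Con_action G X \<phi> = Con_action H Y \<psi>"
  shows "(infinite X \<or> m \<le> card X) \<longleftrightarrow> (infinite Y \<or> m \<le> card Y)"
proof (cases "m = 0")
  case True then show ?thesis by simp
next
  case False
  then have m: "m \<ge> 1" by simp
  have "(infinite X \<or> m \<le> card X) \<longleftrightarrow> (\<exists>S\<in>Con_action G X \<phi>. (\<lambda>C. C!0) ` S = {1..m})"
    using part_card[OF m, of X] part_iff[OF ga, of m] by simp
  also have "\<dots> \<longleftrightarrow> (\<exists>S\<in>Con_action H Y \<psi>. (\<lambda>C. C!0) ` S = {1..m})" using eq by simp
  also have "\<dots> \<longleftrightarrow> (infinite Y \<or> m \<le> card Y)"
    using part_card[OF m, of Y] part_iff[OF gb, of m] by simp
  finally show ?thesis .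
qed

lemma fin_A: "finite X \<longleftrightarrow> (\<exists>m. \<not> (infinite X \<or> m \<le> card X))"
  by (metis Suc_n_not_le_n)

lemma card_A: "(finite X \<and> card X = n) \<longleftrightarrow> ((infinite X \<or> n \<le> card X) \<and> \<not> (infinite X \<or> Suc n \<le> card X))"
  by auto

theorem mainTheorem2:
  fixes G :: "('g, 'm) monoid_scheme" and X :: "'x set" and \<phi> :: "'g \<Rightarrow> 'x \<Rightarrow> 'x"
    and H :: "('h, 'n) monoid_scheme" and Y :: "'y set" and \<psi> :: "'h \<Rightarrow> 'y \<Rightarrow> 'y"
  assumes "group_action G X \<phi>" and "group_action H Y \<psi>"
    and "Con_action G X \<phi> = Con_action H Y \<psi>"
  shows "(finite X \<longleftrightarrow> finite Y) \<and> (infinite X \<longleftrightarrow> infinite Y) \<and>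
         (\<forall>n::nat. (finite X \<and> card X = n) \<longleftrightarrow> (finite Y \<and> card Y = n)) \<and>
         (\<forall>n::nat. (infinite X \<or> n \<le> card X) \<longleftrightarrow> (infinite Y \<or> n \<le> card Y))"
proof -
  have A: "\<And>m. (infinite X \<or> m \<le> card X) \<longleftrightarrow> (infinite Y \<or> m \<le> card Y)"
    using A_iff[OF assms] by blast
  have E: "(\<exists>m. \<not> (infinite X \<or> m \<le> card X)) \<longleftrightarrow> (\<exists>m. \<not> (infinite Y \<or> m \<le> card Y))"
    using A by blast
  have F: "finite X \<longleftrightarrow> finite Y"
    by (subst fin_A, subst fin_A[of Y], rule E)
  have C: "\<forall>n::nat. (finite X \<and> card X = n) \<longleftrightarrow> (finite Y \<and> card Y = n)"
  proof
    fix n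
    show "(finite X \<and> card X = n) \<longleftrightarrow> (finite Y \<and> card Y = n)"
      using card_A[of X n] card_A[of Y n] A[of n] A[of "Suc n"] by blast
  qed
  show ?thesis using F C A by blast
qed

end
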